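(* Assume $t_m=1$. If $w$ is a trident of $u_\beta$ with rooted tooth $X=1$ and $Y\ne0$ is a non-rooted tooth of $w$, then $t_Y=t_1$.
   Context: $\beta>1$ is a simple Parry number with $d_\beta(1)=t_1\cdots t_{m-1}t_m$, $m\ge2$, nonnegative integer digits, $t_1\ge1$, satisfying the Parry condition ($t_i\cdots t_m0^\omega$ lexicographically strictly smaller than $t_1\cdots t_m0^\omega$ for $2\le i\le m$). $\varphi$ is the substitution on $\mathcal A=\{0,\dots,m-1\}$ with $\varphi(k)=0^{t_{k+1}}(k+1)$ for $0\le k\le m-2$, $\varphi(m-1)=0^{t_m}$, and $u_\beta=\lim_n\varphi^n(0)$ is its fixed point. A factor $w$ is left special if at least two distinct letters $a$ make $aw$ a factor of $u_\beta$. A factor $w$ is a trident if there exist letters $X,Y,Z\in\mathcal A$ such that: $wX$ is a left special factor; $wY$ and $wZ$ are factors that are not left special; and the unique left extensions of $wY$ and $wZ$ are distinct. $X$ is the rooted tooth and $Y,Z$ the non-rooted teeth. *)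

theory Defs
  imports Main
begin

text \<open>The R\'enyi expansion d_beta(1) = t_1 ... t_m is represented by the list
  t = [t_1, ..., t_m]; so t_i = t ! (i - 1) and m = length t.\<close>

definition pad0 :: "nat list \<Rightarrow> nat \<Rightarrow> nat" where
  "pad0 xs k = (if k < length xs then xs ! k else 0)"

definition lex_less :: "(nat \<Rightarrow> nat) \<Rightarrow> (nat \<Rightarrow> nat) \<Rightarrow> bool" where
  "lex_less a b \<longleftrightarrow> (\<exists>k. (\<forall>j<k. a j = b j) \<and> a k < b k)"

definition simple_parry_digits :: "nat list \<Rightarrow> bool" where
  "simple_parry_digits t \<longleftrightarrow> length t \<ge> 2 \<and> t ! 0 \<ge> 1 \<and>
     (\<forall>i. 2 \<le> i \<and> i \<le> length t \<longrightarrow> lex_less (pad0 (drop (i - 1) t)) (pad0 t))"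

definition phi :: "nat list \<Rightarrow> nat \<Rightarrow> nat list" where
  "phi t k = replicate (t ! k) 0 @ (if k + 1 < length t then [k + 1] else [])"

definition phi_word :: "nat list \<Rightarrow> nat list \<Rightarrow> nat list" where
  "phi_word t w = concat (map (phi t) w)"

text \<open>u_beta = lim phi^n(0): its i-th letter is read off phi^n(0) for the least n
  with i < |phi^n(0)| (phi^n(0) is a prefix of phi^(n+1)(0) since t_1 >= 1).\<close>
definition u_beta :: "nat list \<Rightarrow> nat \<Rightarrow> nat" where
  "u_beta t i = (((phi_word t) ^^ (LEAST n. i < length (((phi_word t) ^^ n) [0]))) [0]) ! i"

definition factor :: "nat list \<Rightarrow> nat list \<Rightarrow> bool" where
  "factor t w \<longleftrightarrow> (\<exists>i. w = map (u_beta t) [i..<i + length w])"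

definition left_special :: "nat list \<Rightarrow> nat list \<Rightarrow> bool" where
  "left_special t w \<longleftrightarrow> (\<exists>a b. a \<noteq> b \<and> factor t (a # w) \<and> factor t (b # w))"

definition trident_teeth :: "nat list \<Rightarrow> nat list \<Rightarrow> nat \<Rightarrow> nat \<Rightarrow> nat \<Rightarrow> bool" where
  "trident_teeth t w X Y Z \<longleftrightarrow>
     X < length t \<and> Y < length t \<and> Z < length t \<and>
     left_special t (w @ [X]) \<and>
     factor t (w @ [Y]) \<and> \<not> left_special t (w @ [Y]) \<and>
     factor t (w @ [Z]) \<and> \<not> left_special t (w @ [Z]) \<and>
     (\<exists>a b. a < length t \<and> b < length t \<and> a \<noteq> b \<and>
        factor t (a # w @ [Y]) \<and> factor t (b # w @ [Z]))"

end

theory Submission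
  imports Defs
begin

definition Rrel :: "nat \<Rightarrow> nat \<Rightarrow> bool" where
  "Rrel c j \<longleftrightarrow> (0 < c \<and> 0 < j \<longrightarrow> c < j)"

definition Wn :: "nat list \<Rightarrow> nat \<Rightarrow> nat list" where
  "Wn t n = ((phi_word t) ^^ n) [0]"

definition invW :: "nat list \<Rightarrow> nat list \<Rightarrow> bool" where
  "invW t V \<longleftrightarrow> V \<noteq> [] \<and> hd V = 0 \<and> set V \<subseteq> {..<length t} \<and> successively Rrel V"

lemma phi_word_Nil[simp]: "phi_word t [] = []"
  by (simp add: phi_word_def)

lemma phi_word_Cons[simp]: "phi_word t (a # V) = phi t a @ phi_word t V"
  by (simp add: phi_word_def)

lemma phi_word_append[simp]: "phi_word t (xs @ ys) = phi_word t xs @ phi_word t ys"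
  by (simp add: phi_word_def)

lemma last_t: "length t \<ge> 2 \<Longrightarrow> last t = 1 \<Longrightarrow> t ! (length t - 1) = 1"
  by (metis last_conv_nth list.size(3) not_numeral_le_zero)

lemma phi_nonempty:
  assumes "length t \<ge> 2" "last t = 1" "a < length t"
  shows "phi t a \<noteq> []"
proof (cases "a + 1 < length t")
  case True then show ?thesis by (simp add: phi_def)
next
  case False
  then have "a = length t - 1" using assms by auto
  then show ?thesis using last_t[OF assms(1,2)] False by (simp add: phi_def)
qed

lemma phi_last:
  assumes "length t \<ge> 2" "last t = 1" "a < length t"
  shows "last (phi t a) = (if a + 1 < length t then a + 1 else 0)"
proof (cases "a + 1 < length t")
  case True then show ?thesis by (simp add: phi_def)
next
  case False
  then have "a = length t - 1" using assms by auto
  then show ?thesis using last_t[OF assms(1,2)] False by (simp add: phi_def)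
qed

lemma phi_hd:
  assumes "length t \<ge> 2" "last t = 1" "a < length t"
  shows "hd (phi t a) = (if 0 < t ! a then 0 else a + 1) \<and> (t ! a = 0 \<longrightarrow> a + 1 < length t)"
proof (cases "a + 1 < length t")
  case True then show ?thesis by (cases "t ! a") (simp_all add: phi_def)
next
  case False
  then have "a = length t - 1" using assms by auto
  then show ?thesis using last_t[OF assms(1,2)] False by (simp add: phi_def)
qed

lemma phi_set:
  assumes "length t \<ge> 2" "a < length t"
  shows "set (phi t a) \<subseteq> {..<length t}"
  using assms by (auto simp: phi_def)

lemma succ_rep: "successively Rrel (replicate k 0 @ xs)" if "length xs \<le> 1" for xs
  using that
proof (induction k)
  case 0 then show ?case by (cases xs) auto
next
  case (Suc k)
  then show ?case by (cases k) (auto simp: Rrel_def successively_Cons)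
qed

lemma phi_succ: "successively Rrel (phi t a)"
  unfolding phi_def by (rule succ_rep) auto

lemma phi_word_nonempty:
  assumes "length t \<ge> 2" "last t = 1" "set V \<subseteq> {..<length t}" "V \<noteq> []"
  shows "phi_word t V \<noteq> []"
  using assms phi_nonempty by (cases V) auto

lemma phi_word_hd:
  assumes "length t \<ge> 2" "last t = 1" "set V \<subseteq> {..<length t}" "V \<noteq> []"
  shows "hd (phi_word t V) = hd (phi t (hd V))"
  using assms phi_nonempty by (cases V) auto

lemma phi_word_succ:
  assumes "length t \<ge> 2" "last t = 1" "t ! 0 \<ge> 1"
  shows "set V \<subseteq> {..<length t} \<Longrightarrow> successively Rrel V \<Longrightarrow> successively Rrel (phi_word t V)"
proof (induction V)
  case Nil then show ?case by simp
next
  case (Cons a V)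
  have IH: "successively Rrel (phi_word t V)" using Cons by (cases "V = []") (auto simp: successively_Cons)
  have junc: "Rrel (last (phi t a)) (hd (phi_word t V))" if "V \<noteq> []"
  proof -
    have b: "hd V < length t" "Rrel a (hd V)" using Cons that by (auto simp: successively_Cons) (meson hd_in_set lessThan_iff subsetD)
    have a: "a < length t" using Cons by auto
    have h: "hd (phi_word t V) = hd (phi t (hd V))"
      using phi_word_hd[OF assms(1,2)] Cons that by auto
    show ?thesis
      using phi_last[OF assms(1,2) a] phi_hd[OF assms(1,2) b(1)] h b(2) assms(3)
      by (cases "hd V = 0") (auto simp: Rrel_def)
  qed
  show ?case
    using IH junc phi_succ[of t a]
    by (cases "V = []") (auto simp: successively_append_iff)
qed

lemma inv_phi:
  assumes "length t \<ge> 2" "last t = 1" "t ! 0 \<ge> 1" "invW t V"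
  shows "invW t (phi_word t V)"
proof -
  have s: "set (phi_word t V) \<subseteq> {..<length t}"
    using assms(4) phi_set[OF assms(1)] unfolding invW_def phi_word_def by fastforce
  have h: "hd (phi t 0) = 0" using assms(3) by (cases "t ! 0") (auto simp: phi_def)
  show ?thesis
    using s h assms phi_word_nonempty[OF assms(1,2)] phi_word_hd[OF assms(1,2)] phi_word_succ[OF assms(1-3)]
    unfolding invW_def by auto
qed


lemma concat_split:
  "concat (map f V) = xs @ x # ys \<Longrightarrow>
   \<exists>V1 a V2 p s. V = V1 @ a # V2 \<and> f a = p @ x # s \<and> xs = concat (map f V1) @ p"
proof (induction V arbitrary: xs)
  case Nil then show ?case by simp
next
  case (Cons b V)
  then have "f b @ concat (map f V) = xs @ x # ys" by simp
  then obtain us where us: "(f b = xs @ us \<and> us @ concat (map f V) = x # ys) \<or>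
      (f b @ us = xs \<and> concat (map f V) = us @ x # ys)"
    by (auto simp: append_eq_append_conv2)
  then show ?case
  proof
    assume h: "f b = xs @ us \<and> us @ concat (map f V) = x # ys"
    show ?thesis
    proof (cases us)
      case Nil
      then have "concat (map f V) = [] @ x # ys" using h by simp
      then obtain V1 a V2 p s where "V = V1 @ a # V2" "f a = p @ x # s" "[] = concat (map f V1) @ p"
        using Cons.IH by blast
      then show ?thesis using h Nil
        by (intro exI[of _ "b # V1"] exI[of _ a] exI[of _ V2] exI[of _ p] exI[of _ s]) auto
    next
      case (Cons y s)
      then show ?thesis using h
        by (intro exI[of _ "[]"] exI[of _ b] exI[of _ V] exI[of _ xs] exI[of _ s]) auto
    qed
  next
    assume h: "f b @ us = xs \<and> concat (map f V) = us @ x # ys"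
    then obtain V1 a V2 p s where "V = V1 @ a # V2" "f a = p @ x # s" "us = concat (map f V1) @ p"
      using Cons.IH by blast
    then show ?thesis using h
      by (intro exI[of _ "b # V1"] exI[of _ a] exI[of _ V2] exI[of _ p] exI[of _ s]) auto
  qed
qed

lemma rep_split:
  "replicate k (0::nat) @ L = p @ x # s \<Longrightarrow> x \<noteq> 0 \<Longrightarrow> length L \<le> 1 \<Longrightarrow>
   p = replicate k 0 \<and> L = [x] \<and> s = []"
proof (induction p arbitrary: k)
  case Nil
  then show ?case by (cases k; cases L) auto
next
  case (Cons y p)
  then show ?case by (cases k) auto
qed

lemma phi_split:
  assumes "phi t a = p @ x # s" "x \<noteq> 0"
  shows "p = replicate (t ! a) 0 \<and> x = a + 1 \<and> a + 1 < length t"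
proof -
  have "replicate (t ! a) 0 @ (if a + 1 < length t then [a + 1] else []) = p @ x # s"
    using assms(1) by (simp add: phi_def)
  from rep_split[OF this assms(2)] show ?thesis by (cases "a + 1 < length t") auto
qed

lemma suff0:
  assumes "zs @ us = xs @ replicate k (0::nat)" "length us \<le> k"
  shows "us = replicate (length us) 0"
proof -
  have l: "length zs \<ge> length xs" using arg_cong[OF assms(1), of length] assms(2) by simp
  have "us = drop (length zs) (zs @ us)" by simp
  also have "\<dots> = drop (length zs) (xs @ replicate k 0)" using assms(1) by simp
  also have "\<dots> = replicate (k - (length zs - length xs)) 0" using l by simp
  finally show ?thesis by (metis length_replicate)
qed

lemma suff_ex:
  assumes "zs @ w = xs @ us" "length us \<le> length w"
  shows "\<exists>w'. w = w' @ us"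
  using assms by (auto simp: append_eq_append_conv2)

locale stdp =
  fixes t :: "nat list"
  assumes len2: "length t \<ge> 2" and lastt: "last t = 1" and t0: "t ! 0 \<ge> 1"
begin

lemma Wn_Suc: "Wn t (Suc n) = phi_word t (Wn t n)"
  by (simp add: Wn_def)

lemma inv_Wn: "invW t (Wn t n)"
proof (induction n)
  case 0 then show ?case using len2 by (auto simp: Wn_def invW_def)
next
  case (Suc n) then show ?case using inv_phi[OF len2 lastt t0] by (simp add: Wn_Suc)
qed

lemma phi0: "\<exists>zs. phi t 0 = 0 # zs"
  using t0 by (cases "t ! 0") (auto simp: phi_def)

lemma Wn_prefix1: "\<exists>zs. Wn t (Suc n) = Wn t n @ zs"
proof (induction n)
  case 0 then show ?case using phi0 by (auto simp: Wn_def)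
next
  case (Suc n)
  then obtain zs where "Wn t (Suc n) = Wn t n @ zs" by blast
  then show ?case by (simp add: Wn_Suc)
qed

lemma Wn_prefix: "n \<le> k \<Longrightarrow> \<exists>zs. Wn t k = Wn t n @ zs"
proof (induction k rule: dec_induct)
  case base then show ?case by auto
next
  case (step k)
  then show ?case using Wn_prefix1[of k] by (metis append.assoc)
qed

lemma len_phi_word: "set V \<subseteq> {..<length t} \<Longrightarrow> length (phi_word t V) \<ge> length V"
proof (induction V)
  case Nil then show ?case by simp
next
  case (Cons a V)
  then have "phi t a \<noteq> []" using phi_nonempty[OF len2 lastt] by auto
  then have "length (phi t a) \<ge> 1" by (cases "phi t a") auto
  then show ?case using Cons by simp
qed

lemma len_Wn: "length (Wn t n) \<ge> Suc n"
proof (induction n)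
  case 0 then show ?case by (simp add: Wn_def)
next
  case (Suc n)
  have i: "invW t (Wn t n)" by (rule inv_Wn)
  then obtain V where V: "Wn t n = 0 # V" unfolding invW_def by (cases "Wn t n") auto
  have sV: "set V \<subseteq> {..<length t}" using i V unfolding invW_def by auto
  have "length (phi t 0) \<ge> 2" using t0 len2 by (simp add: phi_def)
  then have "length (phi_word t (Wn t n)) \<ge> 2 + length V"
    using V len_phi_word[OF sV] by simp
  then show ?case using Suc V by (simp add: Wn_Suc)
qed

lemma u_Wn: "k < length (Wn t n) \<Longrightarrow> u_beta t k = Wn t n ! k"
proof -
  assume k: "k < length (Wn t n)"
  let ?N = "LEAST n. k < length (((phi_word t) ^^ n) [0])"
  have k': "k < length (((phi_word t) ^^ n) [0])" using k by (simp add: Wn_def)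
  have N1: "?N \<le> n" using k' by (rule Least_le)
  have N2: "k < length (Wn t ?N)" using LeastI[where P="\<lambda>n. k < length (((phi_word t) ^^ n) [0])", OF k'] by (simp add: Wn_def)
  obtain zs where "Wn t n = Wn t ?N @ zs" using Wn_prefix[OF N1] by blast
  then show ?thesis using N2 by (simp add: u_beta_def Wn_def nth_append)
qed

lemma factor_infix: "factor t v \<Longrightarrow> \<exists>n xs ys. Wn t (Suc n) = xs @ v @ ys"
proof -
  assume "factor t v"
  then obtain i where v: "v = map (u_beta t) [i..<i + length v]" unfolding factor_def by blast
  define n where "n = i + length v"
  define L where "L = Wn t (Suc n)"
  have lenL: "i + length v \<le> length L" using len_Wn[of "Suc n"] unfolding L_def n_def by simp
  have "v = map (\<lambda>k. L ! k) [i..<i + length v]"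
    apply (subst v)
    apply (rule map_cong[OF refl])
    using u_Wn lenL unfolding L_def by auto
  also have "\<dots> = take (length v) (drop i L)"
    using lenL by (intro nth_equalityI) auto
  finally have "L = take i L @ v @ drop (i + length v) L"
    by (metis add.commute append_take_drop_id drop_drop)
  then show ?thesis unfolding L_def by blast
qed

lemma occ1:
  assumes "Wn t n = xs @ 1 # ys"
  shows "\<exists>xs'. xs = xs' @ replicate (t ! 0) 0"
proof (cases n)
  case 0 then show ?thesis using assms by (cases xs) (auto simp: Wn_def)
next
  case (Suc n')
  then have "concat (map (phi t) (Wn t n')) = xs @ 1 # ys"
    using assms by (simp add: Wn_Suc phi_word_def)
  from concat_split[OF this] obtain V1 a V2 p s where
    h: "Wn t n' = V1 @ a # V2" "phi t a = p @ 1 # s" "xs = concat (map (phi t) V1) @ p" by blast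
  from phi_split[OF h(2)] have "p = replicate (t ! a) 0" "a = 0" by auto
  then show ?thesis using h(3) by blast
qed

lemma occY:
  assumes "Wn t n = xs @ Y # ys" "2 \<le> Y"
  shows "\<exists>xs' c. xs = xs' @ c # replicate (t ! (Y - 1)) 0 \<and> c \<noteq> 0"
proof (cases n)
  case 0 then show ?thesis using assms by (cases xs) (auto simp: Wn_def)
next
  case (Suc n')
  let ?V = "Wn t n'"
  have iv: "invW t ?V" by (rule inv_Wn)
  have "concat (map (phi t) ?V) = xs @ Y # ys"
    using assms Suc by (simp add: Wn_Suc phi_word_def)
  from concat_split[OF this] obtain V1 a V2 p s where
    h: "?V = V1 @ a # V2" "phi t a = p @ Y # s" "xs = concat (map (phi t) V1) @ p" by blast
  from phi_split[OF h(2)] assms(2) have hp: "p = replicate (t ! a) 0" "Y = a + 1" "a + 1 < length t" by auto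
  have "V1 \<noteq> []" using iv h(1) hp(2) assms(2) unfolding invW_def by auto
  then obtain V1' b where V1: "V1 = V1' @ [b]" by (metis rev_exhaust)
  have "successively Rrel ((V1' @ [b]) @ (a # V2))" using iv h(1) V1 unfolding invW_def by simp
  then have R: "Rrel b a" by (simp add: successively_append_iff)
  have "b \<in> set ?V" using h(1) V1 by simp
  then have bl: "b < length t" using iv unfolding invW_def by blast
  have b1: "b + 1 < length t"
    using R hp len2 assms(2) unfolding Rrel_def by (cases "b = 0") auto
  have ne: "phi t b \<noteq> []" by (rule phi_nonempty[OF len2 lastt bl])
  have lb: "last (phi t b) = b + 1" using phi_last[OF len2 lastt bl] b1 by simp
  have "phi t b = butlast (phi t b) @ [b + 1]" using ne lb by (metis append_butlast_last_id)
  then have "xs = (concat (map (phi t) V1') @ butlast (phi t b)) @ (b + 1) # replicate (t ! (Y - 1)) 0"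
    using h(3) hp V1 by simp
  then show ?thesis
    by (intro exI[of _ "concat (map (phi t) V1') @ butlast (phi t b)"] exI[of _ "b + 1"]) simp
qed

end


theorem mainTheorem10:
  fixes t :: "nat list" and w :: "nat list" and Y :: nat
  assumes "simple_parry_digits t"
    and "last t = 1"
    and "\<exists>Z. trident_teeth t w 1 Y Z"
    and "Y \<noteq> 0"
  shows "t ! (Y - 1) = t ! 0"
proof -
  have P: "length t \<ge> 2" "t ! 0 \<ge> 1"
    "\<And>i. 2 \<le> i \<Longrightarrow> i \<le> length t \<Longrightarrow> lex_less (pad0 (drop (i - 1) t)) (pad0 t)"
    using assms(1) unfolding simple_parry_digits_def by auto
  interpret stdp t using P assms(2) by unfold_locales auto
  obtain Z where T: "trident_teeth t w 1 Y Z" using assms(3) by blast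
  have Yl: "Y < length t" and LS: "left_special t (w @ [1])" and FY: "factor t (w @ [Y])"
    and NLS: "\<not> left_special t (w @ [Y])"
    using T unfolding trident_teeth_def by auto
  have Y2: "2 \<le> Y" using LS NLS assms(4) by (cases "Y = 1") auto
  have A: "t ! (Y - 1) \<le> t ! 0"
  proof -
    from P(3)[OF Y2] Yl obtain k where k: "\<forall>j<k. pad0 (drop (Y - 1) t) j = pad0 t j"
      "pad0 (drop (Y - 1) t) k < pad0 t k" unfolding lex_less_def by auto
    have e1: "pad0 (drop (Y - 1) t) 0 = t ! (Y - 1)" using Yl Y2 by (simp add: pad0_def)
    have e2: "pad0 t 0 = t ! 0" using P(1) by (auto simp: pad0_def)
    show ?thesis
    proof (cases k)
      case 0 then show ?thesis using k e1 e2 by simp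
    next
      case (Suc k')
      then have "pad0 (drop (Y - 1) t) 0 = pad0 t 0" using k(1) by blast
      then show ?thesis using e1 e2 by simp
    qed
  qed
  obtain a b where ab: "a \<noteq> b" "factor t (a # w @ [1])" "factor t (b # w @ [1])"
    using LS unfolding left_special_def by auto
  have zero: "\<exists>xs xs'. xs @ c # w = xs' @ replicate (t ! 0) 0"
    if fc: "factor t (c # w @ [1])" for c
  proof -
    obtain n xs ys where "Wn t (Suc n) = xs @ (c # w @ [1]) @ ys"
      using factor_infix[OF fc] by blast
    then have "Wn t (Suc n) = (xs @ c # w) @ 1 # ys" by simp
    from occ1[OF this] show ?thesis by auto
  qed
  have C1: "length w \<ge> t ! 0"
  proof (rule ccontr)
    assume nc: "\<not> ?thesis"
    have "c = 0" if fc: "factor t (c # w @ [1])" for c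
    proof -
      obtain xs xs' where "xs @ c # w = xs' @ replicate (t ! 0) 0" using zero[OF fc] by blast
      moreover have "length (c # w) \<le> t ! 0" using nc by simp
      ultimately have "c # w = replicate (length (c # w)) 0" by (rule suff0)
      then show ?thesis by simp
    qed
    then show False using ab by metis
  qed
  have C2: "t ! 0 \<le> t ! (Y - 1)"
  proof (rule ccontr)
    assume lt: "\<not> ?thesis"
    obtain n xs3 ys3 where "Wn t (Suc n) = xs3 @ (w @ [Y]) @ ys3"
      using factor_infix[OF FY] by blast
    then have "Wn t (Suc n) = (xs3 @ w) @ Y # ys3" by simp
    from occY[OF this Y2] obtain xs'' c where
      c: "xs3 @ w = xs'' @ c # replicate (t ! (Y - 1)) 0" "c \<noteq> 0" by blast
    have "length (c # replicate (t ! (Y - 1)) 0) \<le> length w" using C1 lt by simp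
    from suff_ex[OF c(1) this] obtain w' where w': "w = w' @ c # replicate (t ! (Y - 1)) 0"
      by blast
    obtain xs xs' where "xs @ a # w = xs' @ replicate (t ! 0) 0" using zero[OF ab(2)] by blast
    then have "(xs @ a # w') @ c # replicate (t ! (Y - 1)) 0 = xs' @ replicate (t ! 0) 0"
      using w' by simp
    moreover have "length (c # replicate (t ! (Y - 1)) 0) \<le> t ! 0" using lt by simp
    ultimately have "c # replicate (t ! (Y - 1)) 0 = replicate (length (c # replicate (t ! (Y - 1)) 0)) 0"
      by (rule suff0)
    then show False using c(2) by simp
  qed
  show ?thesis using A C2 by simp
qed

end
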